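(* Let $F_2$ be the free group on generators $a,b$, and let $\mathcal A=\{a,b,\bar a,\bar b\}$, where $\bar a,\bar b$ denote $a^{-1},b^{-1}$. There exist a real number $\alpha>1$, an integer $n_0\in\mathbb N$, and, for every even $n\in\mathbb N$, a set $\mathcal W_n$ of words in the alphabet $\mathcal A$ such that for all even $n$: (1) every $w\in\mathcal W_n$ has length $n$ and represents the identity element of $F_2$; (2) if $n\geq n_0$ then $|\mathcal W_n|\geq \alpha^n$; (3) for every integer $t$ with $n/4\le t<n/2$, the initial subwords (prefixes) of length $t$ of distinct words in $\mathcal W_n$ represent distinct elements of $F_2$, i.e. the map $w\mapsto$ (element of $F_2$ represented by the length-$t$ prefix of $w$) is injective on $\mathcal W_n$.
   Context: A word in $\mathcal A$ is a finite sequence of letters from $\mathcal A$; it represents the element of $F_2$ obtained by multiplying the letters, with $\bar a=a^{-1}$ and $\bar b=b^{-1}$. A word is called trivial if it represents the identity of $F_2$. *)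

theory Defs
  imports Complex_Main
begin

datatype letter = La | Lb | La_inv | Lb_inv

fun letter_inv :: "letter \<Rightarrow> letter" where
  "letter_inv La = La_inv"
| "letter_inv Lb = Lb_inv"
| "letter_inv La_inv = La"
| "letter_inv Lb_inv = Lb"

definition cancel_step :: "(letter list \<times> letter list) set" where
  "cancel_step = {(p @ [x, letter_inv x] @ q, p @ q) | p x q. True}"

text \<open>Two words represent the same element of F_2 iff they are related by the
  equivalence relation generated by elementary cancellations
  (F_2 = words modulo this relation).\<close>
definition same_elem :: "letter list \<Rightarrow> letter list \<Rightarrow> bool" where
  "same_elem u v \<longleftrightarrow> (u, v) \<in> (cancel_step \<union> cancel_step\<inverse>)\<^sup>*"

definition trivial_word :: "letter list \<Rightarrow> bool" where
  "trivial_word w \<longleftrightarrow> same_elem w []"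

end

theory Submission
  imports Defs
begin

lemma inv_inv[simp]: "letter_inv (letter_inv x) = x"
  by (cases x) auto

fun push :: "letter \<Rightarrow> letter list \<Rightarrow> letter list" where
  "push x [] = [x]"
| "push x (y#ys) = (if y = letter_inv x then ys else x#y#ys)"

fun reduced :: "letter list \<Rightarrow> bool" where
  "reduced [] = True"
| "reduced [x] = True"
| "reduced (x#y#ys) = (y \<noteq> letter_inv x \<and> reduced (y#ys))"

definition red :: "letter list \<Rightarrow> letter list" where
  "red w = foldr push w []"

lemma reduced_tl: "reduced (y#ys) \<Longrightarrow> reduced ys"
  by (cases ys) auto

lemma reduced_push: "reduced r \<Longrightarrow> reduced (push x r)"
  apply (cases r)
   apply simp
  apply (auto dest: reduced_tl)
  done

lemma reduced_red: "reduced (red w)"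
  unfolding red_def by (induction w) (auto intro: reduced_push)

lemma push_push: "reduced r \<Longrightarrow> push x (push (letter_inv x) r) = r"
proof (cases r)
  case Nil then show ?thesis by simp
next
  case (Cons y ys)
  assume R: "reduced r"
  show ?thesis
  proof (cases "y = x")
    case True
    then show ?thesis using R Cons by (cases ys) auto
  next
    case False
    then show ?thesis using Cons by simp
  qed
qed

lemma red_append: "red (p @ q) = foldr push p (red q)"
  unfolding red_def by simp

lemma red_cancel: "red (p @ [x, letter_inv x] @ q) = red (p @ q)"
proof -
  have "red ([x, letter_inv x] @ q) = red q"
    using push_push[OF reduced_red, of x q] by (simp add: red_append red_def)
  then show ?thesis by (metis append.assoc red_append)
qed

lemma step_red: "(u, v) \<in> cancel_step \<Longrightarrow> red u = red v"
  unfolding cancel_step_def using red_cancel by auto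

lemma same_elem_red: "same_elem u v \<Longrightarrow> red u = red v"
  unfolding same_elem_def
proof (induction rule: rtrancl_induct)
  case base then show ?case by simp
next
  case (step y z) then show ?case using step_red by auto
qed

lemma red_pos: "set w \<subseteq> {La, Lb} \<Longrightarrow> red w = w"
proof (induction w)
  case Nil then show ?case by (simp add: red_def)
next
  case (Cons x w)
  then have IH: "red w = w" by simp
  have "red (x#w) = push x (red w)" by (simp add: red_def)
  also have "\<dots> = x # w" using Cons.prems IH
  proof (cases w)
    case (Cons y ys)
    have "y \<noteq> letter_inv x" using Cons.prems \<open>w = y # ys\<close> by (cases x; cases y; auto)
    then show ?thesis using IH \<open>w = y # ys\<close> by simp
  qed simp
  finally show ?case .
qed

lemma pos_same: "set p \<subseteq> {La, Lb} \<Longrightarrow> set q \<subseteq> {La, Lb} \<Longrightarrow> same_elem p q \<Longrightarrow> p = q"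
  using same_elem_red red_pos by metis

lemma cancel_chain: "(xs @ u @ rev (map letter_inv u) @ ys, xs @ ys) \<in> cancel_step\<^sup>*"
proof (induction u arbitrary: xs ys)
  case Nil then show ?case by simp
next
  case (Cons x u)
  have 1: "(xs @ x # u @ rev (map letter_inv u) @ [letter_inv x] @ ys, (xs @ [x]) @ [letter_inv x] @ ys) \<in> cancel_step\<^sup>*"
    using Cons.IH[of "xs @ [x]" "letter_inv x # ys"] by simp
  have 2: "((xs @ [x]) @ [letter_inv x] @ ys, xs @ ys) \<in> cancel_step"
    unfolding cancel_step_def by auto
  show ?case using 1 2 by simp
qed

lemma trivial_inv: "trivial_word (u @ rev (map letter_inv u))"
proof -
  have "(u @ rev (map letter_inv u), []) \<in> cancel_step\<^sup>*"
    using cancel_chain[of "[]" u "[]"] by simp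
  then show ?thesis unfolding trivial_word_def same_elem_def
    using rtrancl_mono[of cancel_step "cancel_step \<union> cancel_step\<inverse>"] by blast
qed

definition uw :: "nat \<Rightarrow> letter list \<Rightarrow> letter list" where
  "uw n s = s @ replicate (n div 2 - (n+2) div 4) La"

definition ww :: "nat \<Rightarrow> letter list \<Rightarrow> letter list" where
  "ww n s = uw n s @ rev (map letter_inv (uw n s))"

definition SS :: "nat \<Rightarrow> letter list set" where
  "SS n = {s. set s \<subseteq> {La, Lb} \<and> length s = (n+2) div 4}"

theorem lemma2:
  shows "\<exists>(\<alpha>::real) (n\<^sub>0::nat) (W :: nat \<Rightarrow> letter list set). \<alpha> > 1 \<and>
    (\<forall>n. even n \<longrightarrow>
       (\<forall>w \<in> W n. length w = n \<and> trivial_word w) \<and>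
       (n \<ge> n\<^sub>0 \<longrightarrow> real (card (W n)) \<ge> \<alpha> ^ n) \<and>
       (\<forall>t::nat. n \<le> 4 * t \<and> 2 * t < n \<longrightarrow>
          (\<forall>w \<in> W n. \<forall>v \<in> W n. w \<noteq> v \<longrightarrow> \<not> same_elem (take t w) (take t v))))"
proof (intro exI conjI allI impI)
  show "(1::real) < 2 powr (1/4)" by simp
  fix n :: nat
  assume ev: "even n"
  have kle: "(n+2) div 4 \<le> n div 2" using ev by presburger
  have len: "s \<in> SS n \<Longrightarrow> length (uw n s) = n div 2" for s
    using kle by (simp add: SS_def uw_def)
  show "\<forall>w \<in> ww n ` SS n. length w = n \<and> trivial_word w"
    using len ev by (auto simp: ww_def trivial_inv)
  have take_k: "s \<in> SS n \<Longrightarrow> take ((n+2) div 4) (ww n s) = s" for s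
    using len[of s] kle by (simp add: ww_def uw_def SS_def)
  have inj: "inj_on (ww n) (SS n)"
    by (rule inj_onI) (metis take_k)
  have cardS: "card (SS n) = 2 ^ ((n+2) div 4)"
    unfolding SS_def using card_lists_length_eq[of "{La, Lb}" "(n+2) div 4"] by (simp add: numeral_2_eq_2)
  show "(2 powr (1/4)) ^ n \<le> real (card (ww n ` SS n))" if "0 \<le> n"
  proof -
    have "(2 powr (1/4::real)) ^ n = 2 powr (real n / 4)"
      by (simp add: powr_realpow[symmetric] powr_powr)
    also have "\<dots> \<le> 2 powr real ((n+2) div 4)"
    proof (rule powr_mono)
      have "n \<le> 4 * ((n+2) div 4)" using ev by presburger
      then have "real n \<le> 4 * real ((n+2) div 4)" by linarith
      then show "real n / 4 \<le> real ((n+2) div 4)" by simp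
    qed simp
    also have "\<dots> = real (card (ww n ` SS n))"
      using card_image[OF inj] cardS by (simp add: powr_realpow)
    finally show "(2 powr (1/4)) ^ n \<le> real (card (ww n ` SS n))" .
  qed
  fix t :: nat
  assume tt: "n \<le> 4 * t \<and> 2 * t < n"
  have kt: "(n+2) div 4 \<le> t" using tt ev by presburger
  have tk: "s \<in> SS n \<Longrightarrow> take t (ww n s) = s @ replicate (t - (n+2) div 4) La" for s
  proof -
    assume "s \<in> SS n"
    have h2: "n div 2 + n div 2 = n" using ev by auto
    have tl2: "t \<le> n div 2" using tt h2 by linarith
    have a: "t - n div 2 = 0" "t + (n+2) div 4 - (n div 2 + n div 2) = 0"
      "min (t - (n+2) div 4) (n div 2 - (n+2) div 4) = t - (n+2) div 4"
      using tl2 kt kle h2 by linarith+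
    show ?thesis using \<open>s \<in> SS n\<close> a kt by (simp add: ww_def uw_def SS_def)
  qed
  show "\<forall>w \<in> ww n ` SS n. \<forall>v \<in> ww n ` SS n. w \<noteq> v \<longrightarrow> \<not> same_elem (take t w) (take t v)"
  proof (intro ballI impI notI)
    fix w v assume w: "w \<in> ww n ` SS n" and v: "v \<in> ww n ` SS n" and ne: "w \<noteq> v"
      and se: "same_elem (take t w) (take t v)"
    obtain s where s: "s \<in> SS n" "w = ww n s" using w by auto
    obtain r where r: "r \<in> SS n" "v = ww n r" using v by auto
    have "take t w = take t v"
      by (rule pos_same[OF _ _ se]) (use s r tk in \<open>auto simp: SS_def\<close>)
    then have "s = r" using s r tk by (simp add: SS_def)
    then show False using ne s r by simp
  qed
qed

end
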